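(* Let $X\subseteq\mathbb{FT}^n$ be a projective $n$-polytope and let $\phi:X\to X$ be an $\mathbb{FT}$-module automorphism. Then (i) $\phi$ extends to an $\mathbb{FT}$-module automorphism of $\mathbb{FT}^n$; and (ii) $\phi$ is the restriction to $X$ of a classical affine linear map $\mathbb{R}^n\to\mathbb{R}^n$.
   Context: $\mathbb{FT}$ is $\mathbb{R}$ with $a\oplus b=\max(a,b)$, $a\otimes b=a+b$. $\mathbb{FT}^n$ is an $\mathbb{FT}$-module under componentwise maximum and scaling $(\lambda\otimes x)_i=\lambda+x_i$; module morphisms preserve $\oplus$ and scaling. A tropical polytope is a finitely generated submodule of $\mathbb{FT}^n$. A module $P$ is projective if for every surjective morphism $\pi:N\to M$ and every morphism $g:P\to M$ there exists a morphism $h:P\to N$ with $\pi\circ h=g$. A projective $n$-polytope in $\mathbb{FT}^n$ is a tropical polytope in $\mathbb{FT}^n$ that is projective as an $\mathbb{FT}$-module and whose generator dimension (minimal cardinality of a generating set) is $n$ (for projective polytopes this equals the topological dimension, which is pure, and the dual dimension). *)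

theory Defs
  imports "HOL-Analysis.Analysis"
begin

text \<open>FT^n is modelled as real^'n, with tropical addition = componentwise max
and scalar action (lambda \<otimes> x)_i = lambda + x_i.\<close>

definition tadd :: "real^'n \<Rightarrow> real^'n \<Rightarrow> real^'n" where
  "tadd x y = (\<chi> i. max (x$i) (y$i))"

definition tscale :: "real \<Rightarrow> real^'n \<Rightarrow> real^'n" where
  "tscale l x = (\<chi> i. l + x$i)"

definition ft_module :: "'a set \<Rightarrow> ('a \<Rightarrow> 'a \<Rightarrow> 'a) \<Rightarrow> (real \<Rightarrow> 'a \<Rightarrow> 'a) \<Rightarrow> bool" where
  "ft_module A add sc \<longleftrightarrow>
     (\<forall>x\<in>A. \<forall>y\<in>A. add x y \<in> A) \<and>
     (\<forall>l. \<forall>x\<in>A. sc l x \<in> A) \<and>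
     (\<forall>x\<in>A. \<forall>y\<in>A. \<forall>z\<in>A. add (add x y) z = add x (add y z)) \<and>
     (\<forall>x\<in>A. \<forall>y\<in>A. add x y = add y x) \<and>
     (\<forall>x\<in>A. add x x = x) \<and>
     (\<forall>x\<in>A. sc 0 x = x) \<and>
     (\<forall>l m. \<forall>x\<in>A. sc l (sc m x) = sc (l + m) x) \<and>
     (\<forall>l. \<forall>x\<in>A. \<forall>y\<in>A. sc l (add x y) = add (sc l x) (sc l y)) \<and>
     (\<forall>l m. \<forall>x\<in>A. sc (max l m) x = add (sc l x) (sc m x))"

definition ft_hom :: "'a set \<Rightarrow> ('a \<Rightarrow> 'a \<Rightarrow> 'a) \<Rightarrow> (real \<Rightarrow> 'a \<Rightarrow> 'a) \<Rightarrow>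
                      'b set \<Rightarrow> ('b \<Rightarrow> 'b \<Rightarrow> 'b) \<Rightarrow> (real \<Rightarrow> 'b \<Rightarrow> 'b) \<Rightarrow> ('a \<Rightarrow> 'b) \<Rightarrow> bool" where
  "ft_hom A addA scA B addB scB f \<longleftrightarrow>
     f ` A \<subseteq> B \<and>
     (\<forall>x\<in>A. \<forall>y\<in>A. f (addA x y) = addB (f x) (f y)) \<and>
     (\<forall>l. \<forall>x\<in>A. f (scA l x) = scB l (f x))"

text \<open>Submodule of FT^n generated by a set G: all finite tropical linear
combinations (nonempty, since FT has no neutral element for max).\<close>

definition tspan :: "(real^'n) set \<Rightarrow> (real^'n) set" where
  "tspan G = {x. \<exists>F c. finite F \<and> F \<noteq> {} \<and> F \<subseteq> G \<and>
                        x = (\<chi> i. Max ((\<lambda>g. c g + g$i) ` F))}"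

definition tropical_polytope :: "(real^'n) set \<Rightarrow> bool" where
  "tropical_polytope X \<longleftrightarrow> (\<exists>G. finite G \<and> tspan G = X)"

definition generator_dimension :: "(real^'n) set \<Rightarrow> nat" where
  "generator_dimension X = (LEAST k. \<exists>G. finite G \<and> card G = k \<and> tspan G = X)"

definition projective_over :: "'b itself \<Rightarrow> (real^'n) set \<Rightarrow> bool" where
  "projective_over (t :: 'b itself) X \<longleftrightarrow>
     (\<forall>(N :: 'b set) addN scN (M :: 'b set) addM scM \<pi> g.
        ft_module N addN scN \<longrightarrow> ft_module M addM scM \<longrightarrow>
        ft_hom N addN scN M addM scM \<pi> \<longrightarrow> \<pi> ` N = M \<longrightarrow>
        ft_hom X tadd tscale M addM scM g \<longrightarrow>
        (\<exists>h. ft_hom X tadd tscale N addN scN h \<and> (\<forall>x\<in>X. \<pi> (h x) = g x)))"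

text \<open>Test modules are taken with carriers in the (large) type real set set
(cardinality 2^(2^continuum)).\<close>

definition ft_projective :: "(real^'n) set \<Rightarrow> bool" where
  "ft_projective X \<longleftrightarrow> projective_over TYPE(real set set) X"

definition projective_polytope :: "(real^'n) set \<Rightarrow> bool" where
  "projective_polytope X \<longleftrightarrow>
     tropical_polytope X \<and> ft_projective X \<and> generator_dimension X = CARD('n)"

definition ft_automorphism :: "(real^'n) set \<Rightarrow> (real^'n \<Rightarrow> real^'n) \<Rightarrow> bool" where
  "ft_automorphism X f \<longleftrightarrow> ft_hom X tadd tscale X tadd tscale f \<and> bij_betw f X X"

end

theory Submission imports Defs "HOL-Library.Countable" begin

lemma Max_dom_eq:
  fixes A B :: "'a::linorder set"
  assumes "finite A" "finite B" "A \<noteq> {}" "B \<noteq> {}"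
    and "\<forall>a\<in>A. \<exists>b\<in>B. a \<le> b" and "\<forall>b\<in>B. \<exists>a\<in>A. b \<le> a"
  shows "Max A = Max B"
proof (rule antisym)
  obtain a where a: "a \<in> A" "Max A = a" using Max_in assms by blast
  then obtain b where "b \<in> B" "a \<le> b" using assms by blast
  then show "Max A \<le> Max B" using a assms by (meson Max_ge order_trans)
next
  obtain b where b: "b \<in> B" "Max B = b" using Max_in assms by blast
  then obtain a where "a \<in> A" "b \<le> a" using assms by blast
  then show "Max B \<le> Max A" using b assms by (meson Max_ge order_trans)
qed

definition code :: "nat \<Rightarrow> real \<Rightarrow> real" where
  "code k r = 3 * real k + r / (1 + \<bar>r\<bar>)"

lemma squash_bound: "\<bar>r / (1 + \<bar>r\<bar>)\<bar> < (1::real)"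
proof -
  have d: "0 < 1 + \<bar>r\<bar>" by simp
  have "\<bar>r / (1 + \<bar>r\<bar>)\<bar> = \<bar>r\<bar> / (1 + \<bar>r\<bar>)"
    by (simp only: abs_divide abs_of_pos[OF d])
  also have "\<dots> < 1" using d by (simp only: pos_divide_less_eq) simp
  finally show ?thesis .
qed

lemma squash_inj: "r / (1 + \<bar>r\<bar>) = r' / (1 + \<bar>r'\<bar>) \<Longrightarrow> r = (r'::real)"
proof -
  assume h: "r / (1 + \<bar>r\<bar>) = r' / (1 + \<bar>r'\<bar>)"
  have p: "1 + \<bar>r\<bar> > 0" "1 + \<bar>r'\<bar> > 0" by auto
  from h have e: "r + r * \<bar>r'\<bar> = r' + r' * \<bar>r\<bar>" using p by (simp add: field_simps)
  show "r = r'"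
  proof (cases "r \<ge> 0")
    case True
    show ?thesis
    proof (cases "r' \<ge> 0")
      case True
      with \<open>r \<ge> 0\<close> e show ?thesis by (simp add: mult.commute)
    next
      case False
      have "r * r' \<le> 0" using \<open>r \<ge> 0\<close> False by (simp add: mult_nonneg_nonpos)
      moreover have "r - r * r' = r' + r' * r" using e \<open>r \<ge> 0\<close> False by simp
      ultimately show ?thesis using \<open>r \<ge> 0\<close> False by (simp add: mult.commute)
    qed
  next
    case False
    show ?thesis
    proof (cases "r' \<ge> 0")
      case True
      have "r * r' \<le> 0" using \<open>\<not> r \<ge> 0\<close> True by (simp add: mult_nonpos_nonneg)
      moreover have "r + r * r' = r' - r' * r" using e \<open>\<not> r \<ge> 0\<close> True by simp
      ultimately show ?thesis using \<open>\<not> r \<ge> 0\<close> True by (simp add: mult.commute)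
    next
      case False
      with \<open>\<not> r \<ge> 0\<close> e show ?thesis by (simp add: mult.commute)
    qed
  qed
qed

lemma code_inj: "code k r = code k' r' \<Longrightarrow> k = k' \<and> r = r'"
proof -
  assume h: "code k r = code k' r'"
  have b1: "\<bar>r / (1 + \<bar>r\<bar>)\<bar> < 1" "\<bar>r' / (1 + \<bar>r'\<bar>)\<bar> < 1" by (rule squash_bound)+
  have "3 * (real k - real k') = r' / (1 + \<bar>r'\<bar>) - r / (1 + \<bar>r\<bar>)" using h by (simp add: code_def algebra_simps)
  then have "\<bar>3 * (real k - real k')\<bar> < 2" using b1 by linarith
  moreover have "k < k' \<Longrightarrow> real k + 1 \<le> real k'" "k' < k \<Longrightarrow> real k' + 1 \<le> real k"
    using of_nat_le_iff[of "k+1" k', where 'a=real] of_nat_le_iff[of "k'+1" k, where 'a=real] by auto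
  ultimately have "k = k'" by (cases k k' rule: linorder_cases) auto
  moreover from this h have "r / (1 + \<bar>r\<bar>) = r' / (1 + \<bar>r'\<bar>)" by (simp add: code_def)
  ultimately show ?thesis using squash_inj by blast
qed

definition enc :: "real^'n::finite \<Rightarrow> real set set" where
  "enc x = {range (\<lambda>i. code (to_nat i) (x$i))}"

lemma enc_inj: "inj enc"
proof (rule injI)
  fix x y :: "real^'n"
  assume "enc x = enc y"
  then have e: "range (\<lambda>i. code (to_nat i) (x$i)) = range (\<lambda>i. code (to_nat i) (y$i))"
    by (simp add: enc_def)
  show "x = y"
  proof (subst vec_eq_iff, rule allI)
    fix i
    have "code (to_nat i) (x$i) \<in> range (\<lambda>i. code (to_nat i) (y$i))" unfolding e[symmetric] by (rule rangeI)
    then obtain j where "code (to_nat i) (x$i) = code (to_nat j) (y$j)" by (rule rangeE)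
    from code_inj[OF this] have "to_nat i = to_nat j" "x$i = y$j" by blast+
    then show "x$i = y$i" by auto
  qed
qed


lemma tadd_nth[simp]: "tadd x y $ i = max (x$i) (y$i)" by (simp add: tadd_def)
lemma tscale_nth[simp]: "tscale l x $ i = l + x$i" by (simp add: tscale_def)

definition gmapJ :: "('n::finite \<Rightarrow> real^'m) \<Rightarrow> 'n set \<Rightarrow> real^'n \<Rightarrow> real^'m" where
  "gmapJ g J c = (\<chi> k. Max ((\<lambda>j. c$j + g j $ k) ` J))"

lemma gmapJ_nth: "gmapJ g J c $ k = Max ((\<lambda>j. c$j + g j $ k) ` J)"
  by (simp add: gmapJ_def)

lemma gmapJ_ge: "j \<in> J \<Longrightarrow> c$j + g j $ k \<le> gmapJ g J c $ k"
  by (simp add: gmapJ_nth)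

lemma gmapJ_single: "gmapJ g {j} c = tscale (c$j) (g j)"
  by (simp add: vec_eq_iff gmapJ_nth)

lemma gmapJ_insert: "J \<noteq> {} \<Longrightarrow> gmapJ g (insert j J) c = tadd (tscale (c$j) (g j)) (gmapJ g J c)"
  by (simp add: vec_eq_iff gmapJ_nth)

lemma gmapJ_tspan:
  assumes "inj g" "J \<noteq> {}"
  shows "gmapJ g J c \<in> tspan (g ` J)"
proof -
  have "gmapJ g J c = (\<chi> i. Max ((\<lambda>v. c $ inv g v + v$i) ` (g ` J)))"
    by (simp add: gmapJ_def image_image inv_f_f[OF assms(1)])
  moreover have "finite (g ` J)" "g ` J \<noteq> {}" "g ` J \<subseteq> g ` J" using assms(2) by auto
  ultimately show ?thesis unfolding tspan_def
    by (intro CollectI exI[of _ "g ` J"] exI[of _ "\<lambda>v. c $ inv g v"]) simp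
qed

lemma tspan_mono: "A \<subseteq> B \<Longrightarrow> tspan A \<subseteq> tspan B"
proof
  fix x assume AB: "A \<subseteq> B" and "x \<in> tspan A"
  then obtain F c where "finite F" "F \<noteq> {}" "F \<subseteq> A" "x = (\<chi> i. Max ((\<lambda>g. c g + g$i) ` F))"
    unfolding tspan_def by auto
  moreover have "F \<subseteq> B" using AB \<open>F \<subseteq> A\<close> by auto
  ultimately show "x \<in> tspan B" unfolding tspan_def by auto
qed

lemma gmap_tadd: "gmapJ g UNIV (tadd c d) = tadd (gmapJ g UNIV c) (gmapJ g UNIV d)"
proof -
  have "Max (range (\<lambda>j. max (c$j) (d$j) + g j $ k)) =
        max (Max (range (\<lambda>j. c$j + g j $ k))) (Max (range (\<lambda>j. d$j + g j $ k)))" for k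
  proof (rule antisym)
    show "Max (range (\<lambda>j. max (c$j) (d$j) + g j $ k)) \<le>
        max (Max (range (\<lambda>j. c$j + g j $ k))) (Max (range (\<lambda>j. d$j + g j $ k)))"
    proof (rule Max.boundedI)
      fix a assume "a \<in> range (\<lambda>j. max (c$j) (d$j) + g j $ k)"
      then obtain j where "a = max (c$j) (d$j) + g j $ k" by blast
      moreover have "c$j + g j $ k \<le> Max (range (\<lambda>j. c$j + g j $ k))" by simp
      moreover have "d$j + g j $ k \<le> Max (range (\<lambda>j. d$j + g j $ k))" by simp
      ultimately show "a \<le> max (Max (range (\<lambda>j. c$j + g j $ k))) (Max (range (\<lambda>j. d$j + g j $ k)))"
        by linarith
    qed auto
  next
    have "c$j + g j $ k \<le> Max (range (\<lambda>j. max (c$j) (d$j) + g j $ k))" for j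
      by (rule order_trans[OF _ Max_ge[of _ "max (c$j) (d$j) + g j $ k"]]) auto
    moreover have "d$j + g j $ k \<le> Max (range (\<lambda>j. max (c$j) (d$j) + g j $ k))" for j
      by (rule order_trans[OF _ Max_ge[of _ "max (c$j) (d$j) + g j $ k"]]) auto
    ultimately show "max (Max (range (\<lambda>j. c$j + g j $ k))) (Max (range (\<lambda>j. d$j + g j $ k)))
        \<le> Max (range (\<lambda>j. max (c$j) (d$j) + g j $ k))"
      by (auto intro!: Max.boundedI)
  qed
  then show ?thesis by (simp add: vec_eq_iff gmapJ_nth)
qed

lemma gmap_tscale: "gmapJ g UNIV (tscale l c) = tscale l (gmapJ g UNIV c)"
proof -
  have "Max (range (\<lambda>j. (l + c$j) + g j $ k)) = l + Max (range (\<lambda>j. c$j + g j $ k))" for k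
    using Max_add_commute[of UNIV "\<lambda>j. c$j + g j $ k" l] by (simp add: add_ac)
  then show ?thesis by (simp add: vec_eq_iff gmapJ_nth)
qed

lemma gmap_resid:
  fixes g :: "'n::finite \<Rightarrow> real^'m"
  assumes "y \<in> tspan (range g)"
  shows "gmapJ g UNIV (\<chi> j. Min (range (\<lambda>k. y$k - g j $ k))) = y"
proof -
  let ?c = "(\<chi> j. Min (range (\<lambda>k. y$k - g j $ k))) :: real^'n"
  obtain F c0 where F: "finite F" "F \<noteq> {}" "F \<subseteq> range g"
    and y: "y = (\<chi> i. Max ((\<lambda>v. c0 v + v$i) ` F))"
    using assms unfolding tspan_def by blast
  have yge: "c0 v + v$k \<le> y$k" if "v \<in> F" for v k
    using that F y by simp
  show ?thesis
  proof (subst vec_eq_iff, rule allI)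
    fix i
    have c_le: "?c$j + g j $ i \<le> y$i" for j
    proof -
      have "?c$j \<le> y$i - g j $ i" by (simp add: Min_le)
      then show ?thesis by linarith
    qed
    have "Max ((\<lambda>v. c0 v + v$i) ` F) \<in> (\<lambda>v. c0 v + v$i) ` F" using F by (intro Max_in) auto
    then obtain v where v: "v \<in> F" "y$i = c0 v + v$i" using y by auto
    obtain j where j: "v = g j" using v F by blast
    have "c0 v \<le> Min (range (\<lambda>k. y$k - g j $ k))"
    proof (rule Min.boundedI)
      fix a assume "a \<in> range (\<lambda>k. y$k - g j $ k)"
      then obtain k where "a = y$k - g j $ k" by blast
      moreover have "c0 v + v $ k \<le> y $ k" by (rule yge[OF v(1)])
      ultimately show "c0 v \<le> a" using j by simp
    qed auto
    then have "c0 v \<le> ?c$j" by simp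
    then have "y$i \<le> ?c$j + g j $ i" using v j by simp
    also have "\<dots> \<le> gmapJ g UNIV ?c $ i" by (rule gmapJ_ge) simp
    finally have "y$i \<le> gmapJ g UNIV ?c $ i" .
    moreover have "gmapJ g UNIV ?c $ i \<le> y$i"
      unfolding gmapJ_nth by (rule Max.boundedI) (use c_le in auto)
    ultimately show "gmapJ g UNIV ?c $ i = y$i" by simp
  qed
qed

definition rhom :: "(real^'n) set \<Rightarrow> (real^'n \<Rightarrow> real) \<Rightarrow> bool" where
  "rhom X f \<longleftrightarrow> (\<forall>x\<in>X. \<forall>y\<in>X. f (tadd x y) = max (f x) (f y)) \<and> (\<forall>l. \<forall>x\<in>X. f (tscale l x) = l + f x)"


lemma Max_remove:
  fixes f :: "'a \<Rightarrow> 'b::linorder"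
  assumes "finite A" "a \<in> A" "f a < Max (f ` A)"
  shows "A - {a} \<noteq> {} \<and> Max (f ` (A - {a})) = Max (f ` A)"
proof -
  have A: "A = insert a (A - {a})" using assms(2) by auto
  show ?thesis
  proof (cases "A - {a} = {}")
    case True
    then have "f ` A = {f a}" using A by (metis image_insert image_empty)
    then show ?thesis using assms(3) by simp
  next
    case False
    have eq: "f ` A = insert (f a) (f ` (A - {a}))" using assms(2) by blast
    have "Max (f ` A) = max (f a) (Max (f ` (A - {a})))"
      unfolding eq using False assms(1) by (intro Max_insert) auto
    then show ?thesis using False assms(3) by (auto simp: max_def split: if_splits)
  qed
qed

locale setting =
  fixes X :: "(real^'n::finite) set" and g :: "'n \<Rightarrow> real^'n" and s :: "real^'n \<Rightarrow> real^'n"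
  assumes g_inj: "inj g"
    and X_eq: "X = tspan (range g)"
    and s_tadd: "\<And>x y. x\<in>X \<Longrightarrow> y\<in>X \<Longrightarrow> s (tadd x y) = tadd (s x) (s y)"
    and s_tscale: "\<And>l x. x\<in>X \<Longrightarrow> s (tscale l x) = tscale l (s x)"
    and s_inv: "\<And>x. x\<in>X \<Longrightarrow> gmapJ g UNIV (s x) = x"
    and minimal: "\<And>G. finite G \<Longrightarrow> tspan G = X \<Longrightarrow> CARD('n) \<le> card G"
begin

definition S :: "'n \<Rightarrow> 'n \<Rightarrow> real" where "S i j = s (g j) $ i"

lemma gJ_in: "J \<noteq> {} \<Longrightarrow> gmapJ g J c \<in> X"
  using gmapJ_tspan[OF g_inj] tspan_mono[of "g ` J" "range g"] X_eq by blast

lemma g_in: "g j \<in> X"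
  using gJ_in[of "{j}" 0] gmapJ_single[of g j 0] by (simp add: tscale_def)

lemma R1:
  assumes f: "rhom X f" and J: "J \<noteq> {}"
  shows "f (gmapJ g J c) = Max ((\<lambda>j. c$j + f (g j)) ` J)"
proof -
  have "finite J" by simp
  then show ?thesis using J
  proof (induction J rule: finite_ne_induct)
    case (singleton j)
    then show ?case using f g_in by (simp add: gmapJ_single rhom_def)
  next
    case (insert j J)
    have "f (gmapJ g (insert j J) c) = f (tadd (tscale (c$j) (g j)) (gmapJ g J c))"
      using insert by (simp add: gmapJ_insert)
    also have "\<dots> = max (f (tscale (c$j) (g j))) (f (gmapJ g J c))"
      using f gJ_in[OF insert(2)] gJ_in[of "{j}" c] gmapJ_single[of g j c]
      by (simp add: rhom_def)
    also have "\<dots> = max (c$j + f (g j)) (Max ((\<lambda>j. c$j + f (g j)) ` J))"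
      using f g_in insert by (simp add: rhom_def)
    also have "\<dots> = Max ((\<lambda>j. c$j + f (g j)) ` insert j J)"
      using insert by simp
    finally show ?case .
  qed
qed

lemma R2: "rhom X f \<Longrightarrow> x \<in> X \<Longrightarrow> f x = Max (range (\<lambda>j. s x $ j + f (g j)))"
  using R1[of f UNIV "s x"] s_inv by simp

lemma s_rhom: "rhom X (\<lambda>x. s x $ i)"
  by (simp add: rhom_def s_tadd s_tscale)

lemma decomp_ge: "x \<in> X \<Longrightarrow> s x $ j + g j $ k \<le> x $ k"
  using gmapJ_ge[of j UNIV "s x" g k] s_inv by simp

lemma S_le: "S i j + g i $ k \<le> g j $ k"
  using decomp_ge[OF g_in] by (simp add: S_def)

lemma redundant:
  assumes "g j0 \<in> tspan (g ` (UNIV - {j0}))"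
  shows False
proof -
  define G' where "G' = g ` (UNIV - {j0})"
  obtain F0 c0 where F0: "finite F0" "F0 \<noteq> {}" "F0 \<subseteq> G'"
    and gj0: "g j0 = (\<chi> i. Max ((\<lambda>v. c0 v + v$i) ` F0))"
    using assms unfolding tspan_def G'_def by blast
  have G'ne: "G' \<noteq> {}" using F0 by auto
  have "X \<subseteq> tspan G'"
  proof
    fix x assume x: "x \<in> X"
    define d where "d v = (if v \<in> F0 then max (s x $ inv g v) (s x $ j0 + c0 v) else s x $ inv g v)" for v
    have "x = (\<chi> i. Max ((\<lambda>v. d v + v$i) ` G'))"
    proof (subst vec_eq_iff, rule allI)
      fix i
      have xi: "x $ i = Max (range (\<lambda>j. s x $ j + g j $ i))"
        using s_inv[OF x] by (metis gmapJ_nth)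
      have "Max (range (\<lambda>j. s x $ j + g j $ i)) = Max ((\<lambda>v. d v + v$i) ` G')"
      proof (rule Max_dom_eq)
        show "\<forall>a\<in>range (\<lambda>j. s x $ j + g j $ i). \<exists>b\<in>(\<lambda>v. d v + v$i) ` G'. a \<le> b"
        proof
          fix a assume "a \<in> range (\<lambda>j. s x $ j + g j $ i)"
          then obtain j where a: "a = s x $ j + g j $ i" by blast
          show "\<exists>b\<in>(\<lambda>v. d v + v$i) ` G'. a \<le> b"
          proof (cases "j = j0")
            case False
            then have "g j \<in> G'" by (simp add: G'_def)
            moreover have "a \<le> d (g j) + g j $ i"
              using a by (simp add: d_def inv_f_f[OF g_inj])
            ultimately show ?thesis by blast
          next
            case True
            have "Max ((\<lambda>v. c0 v + v$i) ` F0) \<in> (\<lambda>v. c0 v + v$i) ` F0" using F0 by (intro Max_in) auto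
            then obtain v where v: "v \<in> F0" "g j0 $ i = c0 v + v$i" using gj0 by (auto simp: vec_eq_iff)
            have "a \<le> d v + v $ i" using a True v by (simp add: d_def)
            moreover have "v \<in> G'" using v F0 by auto
            ultimately show ?thesis by blast
          qed
        qed
        show "\<forall>b\<in>(\<lambda>v. d v + v$i) ` G'. \<exists>a\<in>range (\<lambda>j. s x $ j + g j $ i). b \<le> a"
        proof
          fix b assume "b \<in> (\<lambda>v. d v + v$i) ` G'"
          then obtain j where j: "j \<noteq> j0" "b = d (g j) + g j $ i" by (auto simp: G'_def)
          have a1: "s x $ j + g j $ i \<in> range (\<lambda>j. s x $ j + g j $ i)" by blast
          have a2: "s x $ j0 + g j0 $ i \<in> range (\<lambda>j. s x $ j + g j $ i)" by blast
          show "\<exists>a\<in>range (\<lambda>j. s x $ j + g j $ i). b \<le> a"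
          proof (cases "g j \<in> F0 \<and> s x $ j < s x $ j0 + c0 (g j)")
            case True
            have "c0 (g j) + g j $ i \<le> g j0 $ i"
              using True F0 gj0 by (auto intro!: Max_ge)
            then have "b \<le> s x $ j0 + g j0 $ i" using j True by (simp add: d_def inv_f_f[OF g_inj])
            then show ?thesis using a2 by blast
          next
            case False
            then have "b \<le> s x $ j + g j $ i" using j by (auto simp: d_def inv_f_f[OF g_inj])
            then show ?thesis using a1 by blast
          qed
        qed
      qed (use G'ne in \<open>auto simp: G'_def\<close>)
      then show "x $ i = (\<chi> i. Max ((\<lambda>v. d v + v$i) ` G')) $ i" using xi by simp
    qed
    moreover have "finite G'" by (simp add: G'_def)
    ultimately show "x \<in> tspan G'" unfolding tspan_def using G'ne by blast
  qed
  moreover have "tspan G' \<subseteq> X" using X_eq tspan_mono[of G' "range g"] by (auto simp: G'_def)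
  ultimately have "tspan G' = X" by blast
  then have "CARD('n) \<le> card G'" using minimal by (simp add: G'_def)
  moreover have "card G' = CARD('n) - 1"
    unfolding G'_def using g_inj by (simp add: card_image inj_on_subset card_Diff_singleton)
  moreover have "0 < CARD('n)" by simp
  ultimately show False by arith
qed


lemma S_diag: "S i i = 0"
proof -
  have le: "S i i \<le> 0" using S_le[of i i] by simp
  show ?thesis
  proof (rule ccontr)
    assume "S i i \<noteq> 0"
    then have lt: "S i i < 0" using le by simp
    let ?c = "s (g i)"
    have eq: "gmapJ g (UNIV - {i}) ?c = g i"
    proof (subst vec_eq_iff, rule allI)
      fix k
      have gk: "g i $ k = Max (range (\<lambda>j. ?c $ j + g j $ k))"
        using s_inv[OF g_in] by (metis gmapJ_nth)
      have "?c $ i + g i $ k < Max (range (\<lambda>j. ?c $ j + g j $ k))"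
        using lt gk by (simp add: S_def)
      from Max_remove[OF _ _ this] have
        "Max ((\<lambda>j. ?c $ j + g j $ k) ` (UNIV - {i})) = Max (range (\<lambda>j. ?c $ j + g j $ k))" by simp
      then show "gmapJ g (UNIV - {i}) ?c $ k = g i $ k" using gk by (simp add: gmapJ_nth)
    qed
    have ne: "UNIV - {i} \<noteq> {}"
    proof
      assume e: "UNIV - {i} = {}"
      obtain k :: 'n where True by simp
      have gk: "g i $ k = Max (range (\<lambda>j. ?c $ j + g j $ k))"
        using s_inv[OF g_in] by (metis gmapJ_nth)
      have "?c $ i + g i $ k < Max (range (\<lambda>j. ?c $ j + g j $ k))"
        using lt gk by (simp add: S_def)
      from Max_remove[OF _ _ this] e show False by simp
    qed
    have "g i \<in> tspan (g ` (UNIV - {i}))" using gmapJ_tspan[OF g_inj ne] eq by metis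
    then show False by (rule redundant)
  qed
qed

lemma no_shift:
  assumes "i \<noteq> i'" "\<forall>x\<in>X. s x $ i = d + s x $ i'"
  shows False
proof -
  have 1: "S i i = d + S i' i" using assms(2) g_in by (simp add: S_def)
  have 2: "S i i' = d + S i' i'" using assms(2) g_in by (simp add: S_def)
  have sum: "S i i' + S i' i = 0" using 1 2 S_diag[of i] S_diag[of i'] by simp
  have "g i' = tscale (S i i') (g i)"
  proof (subst vec_eq_iff, rule allI)
    fix k
    show "g i' $ k = tscale (S i i') (g i) $ k"
      using S_le[of i i' k] S_le[of i' i k] sum by simp
  qed
  then have "g i' = gmapJ g {i} (\<chi> j. S i i')" by (simp add: gmapJ_single)
  then have "g i' \<in> tspan (g ` {i})" using gmapJ_tspan[OF g_inj, of "{i}"] by simp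
  moreover have "tspan (g ` {i}) \<subseteq> tspan (g ` (UNIV - {i'}))"
    using assms(1) by (intro tspan_mono) auto
  ultimately show False using redundant by blast
qed

lemma row_exists: "\<exists>k. \<forall>j. g j $ k = g i $ k + S i j"
proof (rule ccontr)
  assume "\<not> ?thesis"
  then have "\<forall>k. \<exists>j. g j $ k \<noteq> g i $ k + S i j" by blast
  have gt: "\<forall>k. \<exists>j. g i $ k < g j $ k - S i j"
  proof
    fix k
    obtain j where "g j $ k \<noteq> g i $ k + S i j" using \<open>\<forall>k. \<exists>j. _\<close> by blast
    moreover have "S i j + g i $ k \<le> g j $ k" by (rule S_le)
    ultimately have "g i $ k < g j $ k - S i j" by linarith
    then show "\<exists>j. g i $ k < g j $ k - S i j" by blast
  qed
  define c :: "real^'n" where "c = (\<chi> j. - S i j)"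
  define M where "M k = gmapJ g UNIV c $ k" for k
  have Mgt: "g i $ k < M k" for k
  proof -
    obtain j where "g i $ k < g j $ k - S i j" using gt by blast
    moreover have "c$j + g j $ k \<le> M k" unfolding M_def by (rule gmapJ_ge) simp
    ultimately show ?thesis by (simp add: c_def)
  qed
  define \<delta> where "\<delta> = Min (range (\<lambda>k. M k - g i $ k))"
  have dpos: "0 < \<delta>"
  proof -
    have "Min (range (\<lambda>k. M k - g i $ k)) \<in> range (\<lambda>k. M k - g i $ k)" by (intro Min_in) auto
    then show ?thesis using Mgt unfolding \<delta>_def by auto
  qed
  have dle: "\<delta> \<le> M k - g i $ k" for k unfolding \<delta>_def by (rule Min_le) auto
  define c' :: "real^'n" where "c' = (\<chi> j. if j = i then \<delta> else c$j)"
  have ci: "c $ i = 0" by (simp add: c_def S_diag)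
  have same: "gmapJ g UNIV c' = gmapJ g UNIV c"
  proof (subst vec_eq_iff, rule allI)
    fix k
    have "Max (range (\<lambda>j. c'$j + g j $ k)) = Max (range (\<lambda>j. c$j + g j $ k))"
    proof (rule Max_dom_eq)
      show "\<forall>a\<in>range (\<lambda>j. c'$j + g j $ k). \<exists>b\<in>range (\<lambda>j. c$j + g j $ k). a \<le> b"
      proof
        fix a assume "a \<in> range (\<lambda>j. c'$j + g j $ k)"
        then obtain j where a: "a = c'$j + g j $ k" by blast
        show "\<exists>b\<in>range (\<lambda>j. c$j + g j $ k). a \<le> b"
        proof (cases "j = i")
          case True
          have "Max (range (\<lambda>j. c$j + g j $ k)) \<in> range (\<lambda>j. c$j + g j $ k)" by (intro Max_in) auto
          moreover have "a \<le> Max (range (\<lambda>j. c$j + g j $ k))"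
            using True a dle[of k] by (simp add: c'_def M_def gmapJ_nth)
          ultimately show ?thesis by blast
        next
          case False
          then show ?thesis using a by (auto simp: c'_def)
        qed
      qed
      show "\<forall>b\<in>range (\<lambda>j. c$j + g j $ k). \<exists>a\<in>range (\<lambda>j. c'$j + g j $ k). b \<le> a"
      proof
        fix b assume "b \<in> range (\<lambda>j. c$j + g j $ k)"
        then obtain j where b: "b = c$j + g j $ k" by blast
        have "b \<le> c'$j + g j $ k" using b ci dpos by (auto simp: c'_def)
        then show "\<exists>a\<in>range (\<lambda>j. c'$j + g j $ k). b \<le> a" by blast
      qed
    qed auto
    then show "gmapJ g UNIV c' $ k = gmapJ g UNIV c $ k" by (simp add: gmapJ_nth)
  qed
  have "s (gmapJ g UNIV c) $ i = Max (range (\<lambda>j. c$j + S i j))"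
    using R1[OF s_rhom, of UNIV c] by (simp add: S_def)
  also have "\<dots> = 0" by (simp add: c_def)
  finally have z: "s (gmapJ g UNIV c) $ i = 0" .
  have "s (gmapJ g UNIV c') $ i = Max (range (\<lambda>j. c'$j + S i j))"
    using R1[OF s_rhom, of UNIV c'] by (simp add: S_def)
  also have "\<dots> \<ge> c'$i + S i i" by (rule Max_ge) auto
  finally have "s (gmapJ g UNIV c') $ i \<ge> \<delta>" by (simp add: c'_def S_diag)
  then show False using z same dpos by simp
qed

definition kap :: "'n \<Rightarrow> 'n" where "kap i = (SOME k. \<forall>j. g j $ k = g i $ k + S i j)"

lemma kap_row: "g j $ kap i = g i $ kap i + S i j"
  using someI_ex[OF row_exists[of i]] unfolding kap_def by blast

lemma coord_kap: "x \<in> X \<Longrightarrow> x $ kap i = g i $ kap i + s x $ i"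
proof -
  assume x: "x \<in> X"
  have fe: "(\<lambda>j. s x $ j + g j $ kap i) = (\<lambda>j. (s x $ j + S i j) + g i $ kap i)"
    by (rule ext, subst kap_row) (simp add: add_ac)
  have "x $ kap i = Max (range (\<lambda>j. s x $ j + g j $ kap i))"
    using s_inv[OF x] by (metis gmapJ_nth)
  also have "\<dots> = Max (range (\<lambda>j. (s x $ j + S i j) + g i $ kap i))"
    by (simp only: fe)
  also have "\<dots> = Max (range (\<lambda>j. s x $ j + S i j)) + g i $ kap i"
    by (rule Max_add_commute) auto
  also have "Max (range (\<lambda>j. s x $ j + S i j)) = s x $ i"
    using R2[OF s_rhom x, of i] by (simp add: S_def)
  finally show ?thesis by simp
qed

lemma kap_inj: "inj kap"
proof (rule injI, rule ccontr)
  fix i i' assume e: "kap i = kap i'" and ne: "i \<noteq> i'"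
  have "\<forall>x\<in>X. s x $ i = (g i' $ kap i' - g i $ kap i) + s x $ i'"
    using coord_kap[of _ i] coord_kap[of _ i'] e by fastforce
  then show False using no_shift[OF ne] by blast
qed

lemma kap_surj: "surj kap"
  by (rule finite_UNIV_inj_surj[OF _ kap_inj]) simp


lemma X_tadd: "x \<in> X \<Longrightarrow> y \<in> X \<Longrightarrow> tadd x y \<in> X"
  using gmap_tadd[of g "s x" "s y"] s_inv[of x] s_inv[of y] gJ_in[of UNIV "tadd (s x) (s y)"] by simp

lemma X_tscale: "x \<in> X \<Longrightarrow> tscale l x \<in> X"
  using gmap_tscale[of g l "s x"] s_inv[of x] gJ_in[of UNIV "tscale l (s x)"] by simp

lemma coord_form:
  assumes hom: "ft_hom X tadd tscale X tadd tscale \<phi>" and bij: "bij_betw \<phi> X X"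
  shows "\<exists>b \<mu>. \<forall>x\<in>X. \<phi> x $ a = \<mu> + x $ b"
proof -
  obtain i where a: "a = kap i" using kap_surj by (metis surjD)
  define \<psi> where "\<psi> = inv_into X \<phi>"
  have img: "\<phi> ` X = X" using bij by (simp add: bij_betw_def)
  have inj: "inj_on \<phi> X" using bij by (simp add: bij_betw_def)
  have \<phi>X: "x \<in> X \<Longrightarrow> \<phi> x \<in> X" for x using img by blast
  have \<psi>X: "y \<in> X \<Longrightarrow> \<psi> y \<in> X" for y unfolding \<psi>_def using img by (metis inv_into_into)
  have \<phi>\<psi>: "y \<in> X \<Longrightarrow> \<phi> (\<psi> y) = y" for y unfolding \<psi>_def using img by (metis f_inv_into_f)
  have \<psi>\<phi>: "x \<in> X \<Longrightarrow> \<psi> (\<phi> x) = x" for x unfolding \<psi>_def using inj by (metis inv_into_f_f)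
  have h_add: "x \<in> X \<Longrightarrow> y \<in> X \<Longrightarrow> \<phi> (tadd x y) = tadd (\<phi> x) (\<phi> y)" for x y
    using hom by (simp add: ft_hom_def)
  have h_sc: "x \<in> X \<Longrightarrow> \<phi> (tscale l x) = tscale l (\<phi> x)" for l x
    using hom by (simp add: ft_hom_def)
  have \<psi>_add: "\<psi> (tadd y z) = tadd (\<psi> y) (\<psi> z)" if "y \<in> X" "z \<in> X" for y z
  proof -
    have "\<phi> (tadd (\<psi> y) (\<psi> z)) = tadd y z" using that h_add \<psi>X \<phi>\<psi> by simp
    then show ?thesis using \<psi>\<phi> X_tadd \<psi>X that by metis
  qed
  have \<psi>_sc: "\<psi> (tscale l y) = tscale l (\<psi> y)" if "y \<in> X" for l y
  proof -
    have "\<phi> (tscale l (\<psi> y)) = tscale l y" using that h_sc \<psi>X \<phi>\<psi> by simp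
    then show ?thesis using \<psi>\<phi> X_tscale \<psi>X that by metis
  qed
  define f where "f x = \<phi> x $ a" for x
  have frhom: "rhom X f" unfolding rhom_def f_def using h_add h_sc by simp
  define r where "r j = f (g j)" for j
  have fy: "y $ a = Max (range (\<lambda>j. s (\<psi> y) $ j + r j))" if "y \<in> X" for y
  proof -
    have "y $ a = f (\<psi> y)" using \<phi>\<psi>[OF that] by (simp add: f_def)
    also have "\<dots> = Max (range (\<lambda>j. s (\<psi> y) $ j + r j))"
      using R2[OF frhom \<psi>X[OF that]] by (simp add: r_def)
    finally show ?thesis .
  qed
  have "Max (range (\<lambda>j. s (\<psi> (g i)) $ j + r j)) \<in> range (\<lambda>j. s (\<psi> (g i)) $ j + r j)"
    by (intro Max_in) auto
  then obtain j0 where "Max (range (\<lambda>j. s (\<psi> (g i)) $ j + r j)) = s (\<psi> (g i)) $ j0 + r j0" by blast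
  then have j0: "g i $ a = s (\<psi> (g i)) $ j0 + r j0" using fy[OF g_in[of i]] by simp
  define h where "h y = s (\<psi> y) $ j0 + r j0" for y
  have hrhom: "rhom X h"
    unfolding rhom_def h_def using \<psi>_add \<psi>_sc \<psi>X s_tadd s_tscale X_tadd X_tscale
    by (simp add: max_add_distrib_left max_add_distrib_right add_ac)
  have hy: "y $ a = h y" if y: "y \<in> X" for y
  proof (rule antisym)
    have "h y = Max (range (\<lambda>l. s y $ l + h (g l)))" by (rule R2[OF hrhom y])
    also have "\<dots> \<ge> s y $ i + h (g i)" by (rule Max_ge) auto
    finally have "s y $ i + h (g i) \<le> h y" .
    moreover have "h (g i) = g i $ a" using j0 by (simp add: h_def)
    moreover have "y $ a = g i $ a + s y $ i" using coord_kap[OF y, of i] a by simp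
    ultimately show "y $ a \<le> h y" by simp
  next
    show "h y \<le> y $ a" unfolding fy[OF y] h_def by (rule Max_ge) auto
  qed
  have "\<forall>x\<in>X. \<phi> x $ a = (r j0 - g j0 $ kap j0) + x $ kap j0"
  proof
    fix x assume x: "x \<in> X"
    have "\<phi> x $ a = h (\<phi> x)" using hy \<phi>X[OF x] by simp
    also have "\<dots> = s x $ j0 + r j0" using \<psi>\<phi>[OF x] by (simp add: h_def)
    also have "\<dots> = (r j0 - g j0 $ kap j0) + x $ kap j0" using coord_kap[OF x, of j0] by simp
    finally show "\<phi> x $ a = (r j0 - g j0 $ kap j0) + x $ kap j0" .
  qed
  then show ?thesis by blast
qed


lemma auto_result:
  assumes hom: "ft_hom X tadd tscale X tadd tscale \<phi>" and bij: "bij_betw \<phi> X X"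
  shows "(\<exists>\<psi>. ft_automorphism UNIV \<psi> \<and> (\<forall>x\<in>X. \<psi> x = \<phi> x))
       \<and> (\<exists>(A :: real^'n^'n) (b :: real^'n). \<forall>x\<in>X. \<phi> x = A *v x + b)"
proof -
  have "\<forall>a. \<exists>p. \<forall>x\<in>X. \<phi> x $ a = snd p + x $ fst p"
    using coord_form[OF hom bij] by fastforce
  then obtain P where P: "\<forall>a. \<forall>x\<in>X. \<phi> x $ a = snd (P a) + x $ fst (P a)"
    by metis
  define \<tau> where "\<tau> a = fst (P a)" for a
  define \<mu> where "\<mu> a = snd (P a)" for a
  have tm: "\<phi> x $ a = \<mu> a + x $ \<tau> a" if "x \<in> X" for x a
    using P that by (simp add: \<tau>_def \<mu>_def)
  have img: "\<phi> ` X = X" using bij by (simp add: bij_betw_def)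
  have \<tau>inj: "inj \<tau>"
  proof (rule injI, rule ccontr)
    fix a a' assume e: "\<tau> a = \<tau> a'" and ne: "a \<noteq> a'"
    obtain i where i: "a = kap i" using kap_surj by (metis surjD)
    obtain i' where i': "a' = kap i'" using kap_surj by (metis surjD)
    have nei: "i \<noteq> i'" using ne i i' by blast
    have "\<forall>y\<in>X. s y $ i = ((\<mu> a - \<mu> a') + g i' $ a' - g i $ a) + s y $ i'"
    proof
      fix y assume y: "y \<in> X"
      then obtain x where x: "x \<in> X" "y = \<phi> x" using img by blast
      have "y $ a = (\<mu> a - \<mu> a') + y $ a'" using tm[OF x(1), of a] tm[OF x(1), of a'] e x(2) by simp
      then show "s y $ i = ((\<mu> a - \<mu> a') + g i' $ a' - g i $ a) + s y $ i'"
        using coord_kap[OF y, of i] coord_kap[OF y, of i'] i i' by simp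
    qed
    then show False using no_shift[OF nei] by blast
  qed
  have \<tau>surj: "surj \<tau>" by (rule finite_UNIV_inj_surj[OF _ \<tau>inj]) simp
  define \<Psi> :: "real^'n \<Rightarrow> real^'n" where "\<Psi> y = (\<chi> a. \<mu> a + y $ \<tau> a)" for y
  have "ft_hom UNIV tadd tscale UNIV tadd tscale \<Psi>"
    unfolding ft_hom_def \<Psi>_def
    by (simp add: vec_eq_iff max_add_distrib_right add_ac)
  moreover have "bij_betw \<Psi> UNIV UNIV"
    unfolding bij_betw_def
  proof
    show "inj \<Psi>"
    proof (rule injI)
      fix x y assume "\<Psi> x = \<Psi> y"
      then have "x $ \<tau> a = y $ \<tau> a" for a by (simp add: \<Psi>_def vec_eq_iff)
      then show "x = y" using \<tau>surj by (metis vec_eq_iff surjD)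
    qed
    show "range \<Psi> = UNIV"
    proof (rule surjI)
      fix z :: "real^'n"
      show "\<Psi> (\<chi> b. z $ inv \<tau> b - \<mu> (inv \<tau> b)) = z"
        by (simp add: \<Psi>_def vec_eq_iff inv_f_f[OF \<tau>inj])
    qed
  qed
  moreover have "\<forall>x\<in>X. \<Psi> x = \<phi> x" by (simp add: \<Psi>_def vec_eq_iff tm)
  ultimately have part1: "\<exists>\<psi>. ft_automorphism UNIV \<psi> \<and> (\<forall>x\<in>X. \<psi> x = \<phi> x)"
    unfolding ft_automorphism_def by blast
  define A :: "real^'n^'n" where "A = (\<chi> a b. if b = \<tau> a then 1 else 0)"
  have Ax: "(A *v x) $ a = x $ \<tau> a" for x a
  proof -
    have "(A *v x) $ a = (\<Sum>b\<in>UNIV. (if b = \<tau> a then 1 else 0) * x $ b)"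
      by (simp add: matrix_vector_mult_def A_def)
    also have "\<dots> = (\<Sum>b\<in>UNIV. (if b = \<tau> a then x $ b else 0))"
      by (rule sum.cong) auto
    also have "\<dots> = x $ \<tau> a" by simp
    finally show ?thesis .
  qed
  have "\<forall>x\<in>X. \<phi> x = A *v x + (\<chi> a. \<mu> a)"
    by (simp add: vec_eq_iff Ax tm add.commute)
  then show ?thesis using part1 by blast
qed

end


lemma tadd_assoc: "tadd (tadd x y) z = tadd x (tadd y z)" by (simp add: vec_eq_iff max.assoc)
lemma tadd_comm: "tadd x y = tadd y x" by (simp add: vec_eq_iff max.commute)
lemma tadd_left_comm: "tadd x (tadd y z) = tadd y (tadd x z)" by (simp add: vec_eq_iff max.left_commute)
lemma tadd_idem: "tadd x x = x" by (simp add: vec_eq_iff)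
lemma tscale_0: "tscale 0 x = x" by (simp add: vec_eq_iff)
lemma tscale_tscale: "tscale l (tscale m x) = tscale (l + m) x" by (simp add: vec_eq_iff add_ac)
lemma tscale_tadd: "tscale l (tadd x y) = tadd (tscale l x) (tscale l y)"
  by (simp add: vec_eq_iff max_add_distrib_right)
lemma tscale_max: "tscale (max l m) x = tadd (tscale l x) (tscale m x)"
  by (simp add: vec_eq_iff max_add_distrib_left)

lemma enc_inv[simp]: "inv enc (enc x) = x"
  by (rule inv_f_f[OF enc_inj])

lemma ft_module_enc:
  fixes Y :: "(real^'n::finite) set"
  assumes cl1: "\<forall>x\<in>Y. \<forall>y\<in>Y. tadd x y \<in> Y" and cl2: "\<forall>l. \<forall>x\<in>Y. tscale l x \<in> Y"
  shows "ft_module (enc ` Y) (\<lambda>a b. enc (tadd (inv enc a :: real^'n) (inv enc b))) (\<lambda>l a. enc (tscale l (inv enc a :: real^'n)))"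
  unfolding ft_module_def using cl1 cl2
  by (auto simp: tadd_assoc tadd_idem tscale_0 tscale_tscale tscale_tadd tscale_max tadd_comm tadd_left_comm)

theorem theorem7p4:
  fixes X :: "(real^'n) set" and \<phi> :: "real^'n \<Rightarrow> real^'n"
  assumes "projective_polytope X"
    and "ft_automorphism X \<phi>"
  shows "(\<exists>\<psi>. ft_automorphism UNIV \<psi> \<and> (\<forall>x\<in>X. \<psi> x = \<phi> x))
       \<and> (\<exists>(A :: real^'n^'n) (b :: real^'n). \<forall>x\<in>X. \<phi> x = A *v x + b)"
proof -
  have tp: "tropical_polytope X" and pr: "ft_projective X" and gd: "generator_dimension X = CARD('n)"
    using assms(1) unfolding projective_polytope_def by auto
  define P where "P k \<longleftrightarrow> (\<exists>G. finite G \<and> card G = k \<and> tspan G = X)" for k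
  have "\<exists>k. P k" using tp unfolding tropical_polytope_def P_def by blast
  then have "P (Least P)" by (rule LeastI_ex)
  moreover have gdP: "generator_dimension X = Least P"
    unfolding generator_dimension_def P_def by simp
  ultimately obtain G where G: "finite G" "card G = CARD('n)" "tspan G = X"
    unfolding P_def using gd by auto
  have minimal: "CARD('n) \<le> card G'" if "finite G'" "tspan G' = X" for G' :: "(real^'n) set"
  proof -
    have "P (card G')" unfolding P_def using that by blast
    then have "Least P \<le> card G'" by (rule Least_le)
    then show ?thesis using gd gdP by simp
  qed
  obtain g where gb: "bij_betw g (UNIV :: 'n set) G"
    using finite_same_card_bij[of "UNIV :: 'n set" G] G by auto
  have g_inj: "inj g" and rg: "range g = G" using gb by (auto simp: bij_betw_def)
  have X_eq: "X = tspan (range g)" using rg G by simp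
  have gm_in: "gmapJ g UNIV c \<in> X" for c
    using gmapJ_tspan[OF g_inj, of UNIV c] X_eq by simp
  have rep: "\<exists>c. gmapJ g UNIV c = y" if "y \<in> X" for y
    using gmap_resid[of y g] that X_eq by blast
  have cl1: "\<forall>x\<in>X. \<forall>y\<in>X. tadd x y \<in> X"
  proof (intro ballI)
    fix x y assume "x \<in> X" "y \<in> X"
    then obtain cx cy where "gmapJ g UNIV cx = x" "gmapJ g UNIV cy = y" using rep by metis
    then show "tadd x y \<in> X" using gm_in[of "tadd cx cy"] gmap_tadd[of g cx cy] by simp
  qed
  have cl2: "\<forall>l. \<forall>x\<in>X. tscale l x \<in> X"
  proof (intro allI ballI)
    fix l x assume "x \<in> X"
    then obtain cx where "gmapJ g UNIV cx = x" using rep by metis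
    then show "tscale l x \<in> X" using gm_in[of "tscale l cx"] gmap_tscale[of g l cx] by simp
  qed
  define E :: "real^'n \<Rightarrow> real set set" where "E = enc"
  have Einj: "inj E" unfolding E_def by (rule enc_inj)
  have DE: "inv E (E x) = x" for x using Einj by (rule inv_f_f)
  define addE where "addE a b = E (tadd (inv E a) (inv E b))" for a b
  define scE where "scE l a = E (tscale l (inv E a))" for l a
  define \<pi> where "\<pi> a = E (gmapJ g UNIV (inv E a))" for a
  have modN: "ft_module (range E) addE scE"
    unfolding addE_def scE_def E_def by (rule ft_module_enc) auto
  have modM: "ft_module (E ` X) addE scE"
    unfolding addE_def scE_def E_def by (rule ft_module_enc[OF cl1 cl2])
  have hom\<pi>: "ft_hom (range E) addE scE (E ` X) addE scE \<pi>"
    unfolding ft_hom_def \<pi>_def addE_def scE_def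
    by (auto simp: DE gm_in gmap_tadd gmap_tscale)
  have sur\<pi>: "\<pi> ` range E = E ` X"
  proof
    show "\<pi> ` range E \<subseteq> E ` X" using hom\<pi> by (simp add: ft_hom_def)
    show "E ` X \<subseteq> \<pi> ` range E"
    proof
      fix a assume "a \<in> E ` X"
      then obtain y where y: "y \<in> X" "a = E y" by blast
      then obtain c where "gmapJ g UNIV c = y" using rep by metis
      then have "\<pi> (E c) = a" using y by (simp add: \<pi>_def DE)
      then show "a \<in> \<pi> ` range E" by blast
    qed
  qed
  have homE: "ft_hom X tadd tscale (E ` X) addE scE E"
    unfolding ft_hom_def addE_def scE_def by (simp add: DE)
  have pr': "\<forall>(N :: real set set set) addN scN (M :: real set set set) addM scM \<pi> g.
        ft_module N addN scN \<longrightarrow> ft_module M addM scM \<longrightarrow>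
        ft_hom N addN scN M addM scM \<pi> \<longrightarrow> \<pi> ` N = M \<longrightarrow>
        ft_hom X tadd tscale M addM scM g \<longrightarrow>
        (\<exists>h. ft_hom X tadd tscale N addN scN h \<and> (\<forall>x\<in>X. \<pi> (h x) = g x))"
    using pr unfolding ft_projective_def projective_over_def by simp
  obtain h where h: "ft_hom X tadd tscale (range E) addE scE h" and h\<pi>: "\<forall>x\<in>X. \<pi> (h x) = E x"
    using pr'[rule_format, OF modN modM hom\<pi> sur\<pi> homE] by blast
  define s where "s x = inv E (h x)" for x
  interpret setting X g s
  proof
    show "inj g" by (rule g_inj)
    show "X = tspan (range g)" by (rule X_eq)
    show "s (tadd x y) = tadd (s x) (s y)" if "x \<in> X" "y \<in> X" for x y
      using h that unfolding ft_hom_def s_def addE_def by (simp add: DE)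
    show "s (tscale l x) = tscale l (s x)" if "x \<in> X" for l x
      using h that unfolding ft_hom_def s_def scE_def by (simp add: DE)
    show "gmapJ g UNIV (s x) = x" if "x \<in> X" for x
    proof -
      have "E (gmapJ g UNIV (s x)) = E x" using h\<pi> that unfolding \<pi>_def s_def by simp
      then show ?thesis using Einj by (simp add: inj_eq)
    qed
    show "CARD('n) \<le> card G'" if "finite G'" "tspan G' = X" for G'
      using minimal that by blast
  qed
  show ?thesis
    using auto_result assms(2) unfolding ft_automorphism_def by blast
qed

end
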